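(* Fix $\varepsilon>0$, let $k_n=e^{n^{2+\varepsilon}}$ and $C=6/\pi^2$, and let $X$ be the random variable with $\mathbb{P}(X=k_n)=\mathbb{P}(X=-k_n)=C/(2k_n^2n^2)$ for $n=1,2,\dots$ and $\mathbb{P}(X=0)=1-\sum_n C/(k_n^2n^2)$. Then $\mathbb{E}X=0$, $\operatorname{Var}(X)=1$, $\mathbb{E}\big[X^2(\log^+|X|)^{1/2}\big]=\infty$, and \[ \limsup_{n\to\infty}\frac{Q_n}{\sqrt{\log n}}=\infty,\qquad\text{where } Q_n=\sum_{k=1}^n\frac1k\Big(\sigma^2-\mathbb{E}\big[|X-\mu|^2\mathbf{1}_{\{|X-\mu|\le\sigma k\}}\big]\Big) \] with $\mu=0,\sigma=1$. In particular, for $f$ with $f''(\mu)\neq0$, $b_n-\tilde b_n\neq o(\sqrt{\log n})$, where $b_n=nf(\mu)+\frac{f''(\mu)}{2}\sum_{k=1}^n\frac1k\mathbb{E}[|X-\mu|^2\mathbf{1}_{\{|X-\mu|\le\sigma k\}}]$ and $\tilde b_n=nf(\mu)+\frac{f''(\mu)\sigma^2}{2}\log n$.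
   Context: $\log^+x=\log(x\vee1)$. *)

theory Defs
  imports "HOL-Probability.Probability" "HOL-Library.Landau_Symbols"
begin

definition logp :: "real \<Rightarrow> real" where
  "logp x = ln (max x 1)"

definition kseq :: "real \<Rightarrow> nat \<Rightarrow> real" where
  "kseq eps n = exp (real n powr (2 + eps))"

definition Cconst :: real where
  "Cconst = 6 / pi\<^sup>2"

end

theory Submission
  imports Defs "HOL-Analysis.Analysis" "HOL-Real_Asymp.Real_Asymp"
begin

lemma kseq_pos: "kseq eps n > 0"
  by (simp add: kseq_def)

lemma kseq_strict: "eps > 0 \<Longrightarrow> m < n \<Longrightarrow> kseq eps m < kseq eps n"
  unfolding kseq_def by (auto intro!: powr_less_mono2)

lemma kseq_inj: "eps > 0 \<Longrightarrow> kseq eps m = kseq eps n \<Longrightarrow> m = n"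
  by (metis kseq_strict less_irrefl nat_neq_iff)

lemma kseq_mono: "eps > 0 \<Longrightarrow> m \<le> n \<Longrightarrow> kseq eps m \<le> kseq eps n"
  by (metis kseq_strict le_less order_refl)

lemma ln_kseq: "ln (kseq eps n) = real n powr (2 + eps)"
  by (simp add: kseq_def)

lemma logp_nonneg: "logp x \<ge> 0"
  unfolding logp_def by (intro ln_ge_zero) simp

lemma Cconst_pos: "Cconst > 0"
  by (simp add: Cconst_def)

locale T3 = prob_space M for M :: "'a measure" +
  fixes X :: "'a \<Rightarrow> real" and eps :: real
  assumes eps: "eps > 0"
    and Xrv[measurable]: "X \<in> borel_measurable M"
    and Ppos: "\<And>n. n \<ge> 1 \<Longrightarrow>
        measure M {\<omega>\<in>space M. X \<omega> = kseq eps n} = Cconst / (2 * (kseq eps n)\<^sup>2 * (real n)\<^sup>2)"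
    and Pneg: "\<And>n. n \<ge> 1 \<Longrightarrow>
        measure M {\<omega>\<in>space M. X \<omega> = - kseq eps n} = Cconst / (2 * (kseq eps n)\<^sup>2 * (real n)\<^sup>2)"
    and Pzero: "measure M {\<omega>\<in>space M. X \<omega> = 0} =
        1 - (\<Sum>n. Cconst / ((kseq eps (Suc n))\<^sup>2 * (real (Suc n))\<^sup>2))"
begin

definition "kk n = kseq eps (Suc n)"
definition "pr n = Cconst / (2 * (kk n)\<^sup>2 * (real (Suc n))\<^sup>2)"
definition "A0 = {\<omega>\<in>space M. X \<omega> = 0}"
definition "Ap n = {\<omega>\<in>space M. X \<omega> = kk n}"
definition "An n = {\<omega>\<in>space M. X \<omega> = - kk n}"

lemma kk_pos: "kk n > 0" by (simp add: kk_def kseq_pos)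
lemma kk_inj: "kk m = kk n \<longleftrightarrow> m = n"
  using kseq_inj[OF eps] by (auto simp: kk_def)
lemma pr_pos: "pr n > 0" using kk_pos[of n] Cconst_pos unfolding pr_def by (intro divide_pos_pos) auto

lemma sets_A[measurable]: "A0 \<in> sets M" "Ap n \<in> sets M" "An n \<in> sets M"
  unfolding A0_def Ap_def An_def by measurable

lemma meas_Ap: "measure M (Ap n) = pr n"
  using Ppos[of "Suc n"] by (simp add: Ap_def pr_def kk_def)
lemma meas_An: "measure M (An n) = pr n"
  using Pneg[of "Suc n"] by (simp add: An_def pr_def kk_def)

lemma disj_Ap: "disjoint_family Ap"
  by (auto simp: disjoint_family_on_def Ap_def kk_inj)
lemma disj_An: "disjoint_family An"
  by (auto simp: disjoint_family_on_def An_def kk_inj)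

lemma pr_sums_p: "pr sums measure M (\<Union>i. Ap i)"
  using finite_measure_UNION[of Ap] disj_Ap sets_A(2) by (auto simp: meas_Ap image_subset_iff)
lemma pr_sums_n: "pr sums measure M (\<Union>i. An i)"
  using finite_measure_UNION[of An] disj_An sets_A(3) by (auto simp: meas_An image_subset_iff)

lemma pr_summable: "summable pr"
  using pr_sums_p sums_summable by blast

lemma meas_A0: "measure M A0 = 1 - 2 * (\<Sum>n. pr n)"
proof -
  have "(\<lambda>n. Cconst / ((kseq eps (Suc n))\<^sup>2 * (real (Suc n))\<^sup>2)) = (\<lambda>n. 2 * pr n)"
    using kk_pos by (auto simp: pr_def kk_def field_simps)
  then show ?thesis using Pzero pr_summable by (simp add: A0_def suminf_mult)
qed

lemma AE_vals: "AE \<omega> in M. \<omega> \<in> A0 \<union> (\<Union>i. Ap i) \<union> (\<Union>i. An i)"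
proof (rule AE_prob_1)
  have d1: "A0 \<inter> (\<Union>i. Ap i) = {}" using kk_pos
    by (auto simp: A0_def Ap_def) (metis less_irrefl)
  have d2: "(A0 \<union> (\<Union>i. Ap i)) \<inter> (\<Union>i. An i) = {}" using kk_pos
    apply (auto simp: A0_def Ap_def An_def)
    by (metis add.inverse_neutral less_irrefl neg_0_less_iff_less) (metis add.inverse_inverse kk_pos less_asym neg_0_less_iff_less)
  have "prob (A0 \<union> (\<Union>i. Ap i) \<union> (\<Union>i. An i)) = prob A0 + prob (\<Union>i. Ap i) + prob (\<Union>i. An i)"
    using d1 d2 by (simp add: finite_measure_Union)
  also have "\<dots> = 1" using meas_A0 sums_unique[OF pr_sums_p] sums_unique[OF pr_sums_n] by simp
  finally show "prob (A0 \<union> (\<Union>i. Ap i) \<union> (\<Union>i. An i)) = 1" .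
qed

lemma pointwise:
  fixes g :: "real \<Rightarrow> ennreal"
  assumes "x \<in> {0} \<union> range kk \<union> range (\<lambda>n. - kk n)"
  shows "g x = g 0 * indicator {0} x + (\<Sum>n. g (kk n) * indicator {kk n} x)
           + (\<Sum>n. g (- kk n) * indicator {- kk n} x)"
proof -
  have np: "kk n \<noteq> 0" "- kk n \<noteq> 0" "kk n \<noteq> - kk m" "- kk n \<noteq> kk m" for n m
    using kk_pos[of n] kk_pos[of m] by auto
  from assms consider "x = 0" | m where "x = kk m" | m where "x = - kk m" by auto
  then show ?thesis
  proof cases
    case 1 then show ?thesis using np by (simp add: indicator_def)
  next
    case 2
    have "(\<lambda>n. g (kk n) * indicator {kk n} x) = (\<lambda>n. if n = m then g (kk m) else 0)"
      using 2 by (auto simp: indicator_def kk_inj)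
    then have "(\<Sum>n. g (kk n) * indicator {kk n} x) = g (kk m)"
      using sums_unique[OF sums_single[of m "\<lambda>_. g (kk m)"]] by simp
    then show ?thesis using 2 np by (simp add: indicator_def)
  next
    case 3
    have "(\<lambda>n. g (- kk n) * indicator {- kk n} x) = (\<lambda>n. if n = m then g (- kk m) else 0)"
      using 3 by (auto simp: indicator_def kk_inj)
    then have "(\<Sum>n. g (- kk n) * indicator {- kk n} x) = g (- kk m)"
      using sums_unique[OF sums_single[of m "\<lambda>_. g (- kk m)"]] by simp
    then show ?thesis using 3 np by (simp add: indicator_def)
  qed
qed

lemma nn_formula:
  fixes g :: "real \<Rightarrow> ennreal"
  shows "(\<integral>\<^sup>+\<omega>. g (X \<omega>) \<partial>M) = g 0 * ennreal (measure M A0)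
     + (\<Sum>n. g (kk n) * ennreal (pr n)) + (\<Sum>n. g (- kk n) * ennreal (pr n))"
proof -
  have "AE \<omega> in M. g (X \<omega>) = g 0 * indicator A0 \<omega> + (\<Sum>n. g (kk n) * indicator (Ap n) \<omega>)
           + (\<Sum>n. g (- kk n) * indicator (An n) \<omega>)"
    using AE_vals AE_space
  proof eventually_elim
    case (elim \<omega>)
    then have "X \<omega> \<in> {0} \<union> range kk \<union> range (\<lambda>n. - kk n)"
      by (auto simp: A0_def Ap_def An_def)
    from pointwise[OF this, of g] elim show ?case
      by (simp add: A0_def Ap_def An_def indicator_def)
  qed
  then have "(\<integral>\<^sup>+\<omega>. g (X \<omega>) \<partial>M) = (\<integral>\<^sup>+\<omega>. g 0 * indicator A0 \<omega> + (\<Sum>n. g (kk n) * indicator (Ap n) \<omega>)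
           + (\<Sum>n. g (- kk n) * indicator (An n) \<omega>) \<partial>M)"
    by (rule nn_integral_cong_AE)
  also have "\<dots> = (\<integral>\<^sup>+\<omega>. g 0 * indicator A0 \<omega> \<partial>M) + (\<integral>\<^sup>+\<omega>. (\<Sum>n. g (kk n) * indicator (Ap n) \<omega>) \<partial>M)
           + (\<integral>\<^sup>+\<omega>. (\<Sum>n. g (- kk n) * indicator (An n) \<omega>) \<partial>M)"
    by (subst nn_integral_add; simp)+
  also have "\<dots> = g 0 * ennreal (measure M A0)
     + (\<Sum>n. g (kk n) * ennreal (pr n)) + (\<Sum>n. g (- kk n) * ennreal (pr n))"
    by (simp add: nn_integral_suminf nn_integral_cmult_indicator emeasure_eq_measure meas_Ap meas_An)
  finally show ?thesis .
qed

lemma kk2pr: "kk n ^ 2 * pr n = Cconst / 2 * (1 / (real n + 1)\<^sup>2)"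
  using kk_pos[of n] by (simp add: pr_def field_simps)

lemma sq_sums: "(\<lambda>n. kk n ^ 2 * pr n) sums (1/2)"
proof -
  have "(\<lambda>n. Cconst / 2 * (1 / (real n + 1)\<^sup>2)) sums (Cconst / 2 * (pi\<^sup>2 / 6))"
  proof -
    have "(\<lambda>n. 1 / (real n + 1)\<^sup>2) sums (pi\<^sup>2 / 6)" using inverse_squares_sums by (simp add: add.commute)
    then show ?thesis by (rule sums_mult)
  qed
  moreover have "Cconst / 2 * (pi\<^sup>2 / 6) = 1/2" by (simp add: Cconst_def)
  ultimately show ?thesis by (simp add: kk2pr)
qed

lemma emult: "ennreal a * ennreal b = ennreal (a * b)" if "0 \<le> a" for a b
  using that by (simp add: ennreal_mult')

lemma nnX2: "(\<integral>\<^sup>+\<omega>. ennreal ((X \<omega>)\<^sup>2) \<partial>M) = 1"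
proof -
  have s: "(\<Sum>n. ennreal ((kk n)\<^sup>2) * ennreal (pr n)) = ennreal (1/2)"
  proof -
    have "(\<lambda>n. ennreal ((kk n)\<^sup>2) * ennreal (pr n)) = (\<lambda>n. ennreal ((kk n)\<^sup>2 * pr n))"
      by (simp add: emult)
    moreover have "(\<Sum>n. ennreal ((kk n)\<^sup>2 * pr n)) = ennreal (1/2)"
      by (rule suminf_ennreal_eq[OF _ sq_sums]) (simp add: pr_pos less_imp_le)
    ultimately show ?thesis by simp
  qed
  have s2: "(\<Sum>n. ennreal ((- kk n)\<^sup>2) * ennreal (pr n)) = ennreal (1/2)"
    using s by simp
  have half: "ennreal (1/2) + ennreal (1/2) = 1"
    by (subst ennreal_plus[symmetric]) auto
  show ?thesis
    using nn_formula[of "\<lambda>x. ennreal (x\<^sup>2)"] s s2 half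
    by simp
qed

lemma int_X2: "integrable M (\<lambda>\<omega>. (X \<omega>)\<^sup>2) \<and> integral\<^sup>L M (\<lambda>\<omega>. (X \<omega>)\<^sup>2) = 1"
  using nn_integral_eq_integrable[where f="\<lambda>\<omega>. (X \<omega>)\<^sup>2" and x=1] nnX2 by simp

lemma int_X: "integrable M X"
  using square_integrable_imp_integrable[OF Xrv] int_X2 by simp

lemma mean0: "integral\<^sup>L M X = 0"
proof -
  have a: "(\<integral>\<^sup>+\<omega>. ennreal (X \<omega>) \<partial>M) = (\<Sum>n. ennreal (kk n) * ennreal (pr n))"
    using nn_formula[of "\<lambda>x. ennreal x"] kk_pos by (simp add: ennreal_neg less_imp_le)
  have b: "(\<integral>\<^sup>+\<omega>. ennreal (- X \<omega>) \<partial>M) = (\<Sum>n. ennreal (kk n) * ennreal (pr n))"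
    using nn_formula[of "\<lambda>x. ennreal (- x)"] kk_pos by (simp add: ennreal_neg less_imp_le)
  show ?thesis using real_lebesgue_integral_def[OF int_X] a b by simp
qed

lemma kk_ge1: "kk n \<ge> 1"
  by (simp add: kk_def kseq_def)

lemma harm_div: "(\<Sum>n. ennreal (Cconst / 2 * inverse (real (Suc n)))) = \<infinity>"
proof (rule ccontr)
  assume "(\<Sum>n. ennreal (Cconst / 2 * inverse (real (Suc n)))) \<noteq> \<infinity>"
  then have "summable (\<lambda>n. Cconst / 2 * inverse (real (Suc n)))"
    using Cconst_pos by (intro summable_suminf_not_top) auto
  then have "summable (\<lambda>n. inverse (real (Suc n)))"
    using Cconst_pos summable_cmult_iff[of "Cconst/2" "\<lambda>n. inverse (real (Suc n))"] by simp
  then have "summable (\<lambda>n. inverse (real n))"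
    using summable_Suc_iff[of "\<lambda>n. inverse (real n)"] by simp
  then show False using not_summable_harmonic[where 'a=real] by simp
qed

lemma term_lb: "ennreal ((kk n)\<^sup>2 * sqrt (logp \<bar>kk n\<bar>)) * ennreal (pr n)
    \<ge> ennreal (Cconst / 2 * inverse (real (Suc n)))"
proof -
  have l: "logp \<bar>kk n\<bar> = real (Suc n) powr (2 + eps)"
    using kk_ge1[of n] by (simp add: logp_def kk_def ln_kseq max_def)
  have "(real (Suc n))\<^sup>2 = real (Suc n) powr 2"
    by (simp add: powr_numeral)
  also have "\<dots> \<le> real (Suc n) powr (2 + eps)"
    using eps by (intro powr_mono) auto
  finally have "real (Suc n) \<le> sqrt (logp \<bar>kk n\<bar>)"
    unfolding l by (intro real_le_rsqrt)
  then have "(kk n)\<^sup>2 * real (Suc n) * pr n \<le> (kk n)\<^sup>2 * sqrt (logp \<bar>kk n\<bar>) * pr n"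
    using pr_pos[of n] by (intro mult_right_mono mult_left_mono) auto
  moreover have "(kk n)\<^sup>2 * real (Suc n) * pr n = Cconst / 2 * inverse (real (Suc n))"
  proof -
    have "(kk n)\<^sup>2 * real (Suc n) * pr n = ((kk n)\<^sup>2 * pr n) * real (Suc n)" by simp
    also have "\<dots> = Cconst / 2 * (1 / (real n + 1)\<^sup>2) * (real n + 1)" by (simp add: kk2pr)
    also have "\<dots> = Cconst / 2 * inverse (real (Suc n))"
    proof -
      have x: "real n + 1 \<noteq> 0" by linarith
      show ?thesis using x by (simp add: power2_eq_square divide_simps)
    qed
    finally show ?thesis .
  qed
  moreover have "ennreal ((kk n)\<^sup>2 * sqrt (logp \<bar>kk n\<bar>)) * ennreal (pr n)
     = ennreal ((kk n)\<^sup>2 * sqrt (logp \<bar>kk n\<bar>) * pr n)"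
    by (rule emult) (simp add: logp_nonneg)
  ultimately show ?thesis
    by (metis ennreal_leI)
qed

lemma infmom: "(\<integral>\<^sup>+\<omega>. ennreal ((X \<omega>)\<^sup>2 * sqrt (logp \<bar>X \<omega>\<bar>)) \<partial>M) = \<infinity>"
proof -
  let ?g = "\<lambda>x. ennreal (x\<^sup>2 * sqrt (logp \<bar>x\<bar>))"
  have "\<infinity> = (\<Sum>n. ennreal (Cconst / 2 * inverse (real (Suc n))))" using harm_div by simp
  also have "\<dots> \<le> (\<Sum>n. ?g (kk n) * ennreal (pr n))"
    by (intro suminf_le summableI term_lb)
  also have "\<dots> \<le> ?g 0 * ennreal (measure M A0) + (\<Sum>n. ?g (kk n) * ennreal (pr n)) + (\<Sum>n. ?g (- kk n) * ennreal (pr n))"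
    by (simp add: add.assoc add_increasing)
  also have "\<dots> = (\<integral>\<^sup>+\<omega>. ?g (X \<omega>) \<partial>M)"
    by (rule nn_formula[symmetric])
  finally show ?thesis by (simp add: top_unique)
qed

definition "E t = integral\<^sup>L M (\<lambda>\<omega>. (X \<omega>)\<^sup>2 * indicator {\<omega>. \<bar>X \<omega>\<bar> \<le> t} \<omega>)"

lemma tail_lb:
  assumes j: "j \<ge> 1" and t: "t < kseq eps j"
  shows "1 - E t \<ge> Cconst / (8 * real j)"
proof -
  define f1 where "f1 = (\<lambda>\<omega>. if \<bar>X \<omega>\<bar> \<le> t then (X \<omega>)\<^sup>2 else 0)"
  define f2 where "f2 = (\<lambda>\<omega>. if t < \<bar>X \<omega>\<bar> then (X \<omega>)\<^sup>2 else 0)"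
  have Ef1: "E t = integral\<^sup>L M f1"
  proof -
    have "(\<lambda>\<omega>. (X \<omega>)\<^sup>2 * indicator {\<omega>. \<bar>X \<omega>\<bar> \<le> t} \<omega>) = f1"
      by (auto simp: fun_eq_iff indicator_def f1_def)
    then show ?thesis by (simp add: E_def)
  qed
  have m1[measurable]: "f1 \<in> borel_measurable M" unfolding f1_def by measurable
  have m2[measurable]: "f2 \<in> borel_measurable M" unfolding f2_def by measurable
  have i1: "integrable M f1"
    by (rule Bochner_Integration.integrable_bound[OF conjunct1[OF int_X2] m1]) (auto simp: f1_def)
  have i2: "integrable M f2"
    by (rule Bochner_Integration.integrable_bound[OF conjunct1[OF int_X2] m2]) (auto simp: f2_def)
  have "integral\<^sup>L M f1 + integral\<^sup>L M f2 = integral\<^sup>L M (\<lambda>\<omega>. f1 \<omega> + f2 \<omega>)"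
    using i1 i2 by simp
  also have "(\<lambda>\<omega>. f1 \<omega> + f2 \<omega>) = (\<lambda>\<omega>. (X \<omega>)\<^sup>2)"
    by (auto simp: f1_def f2_def fun_eq_iff)
  finally have sum1: "E t + integral\<^sup>L M f2 = 1" using int_X2 Ef1 by simp
  let ?g = "\<lambda>x. ennreal (if t < \<bar>x\<bar> then x\<^sup>2 else 0)"
  define F where "F = {j-1..<2*j-1}"
  have cF: "card F = j" using j by (simp add: F_def)
  have termlb: "?g (kk n) * ennreal (pr n) \<ge> ennreal (Cconst / (8 * (real j)\<^sup>2))" if "n \<in> F" for n
  proof -
    have "kseq eps j \<le> kk n" unfolding kk_def using that j by (intro kseq_mono[OF eps]) (auto simp: F_def)
    then have "t < \<bar>kk n\<bar>" using t kk_pos[of n] by simp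
    then have "?g (kk n) * ennreal (pr n) = ennreal ((kk n)\<^sup>2 * pr n)"
      by (simp add: emult)
    also have "(kk n)\<^sup>2 * pr n = Cconst / 2 * (1 / (real n + 1)\<^sup>2)" by (rule kk2pr)
    also have "Cconst / 2 * (1 / (real n + 1)\<^sup>2) \<ge> Cconst / 2 * (1 / (2 * real j)\<^sup>2)"
    proof -
      have "real n + 1 \<le> 2 * real j" using that j by (auto simp: F_def)
      then have "(real n + 1)\<^sup>2 \<le> (2 * real j)\<^sup>2" by (intro power_mono) auto
      then have "1 / (2 * real j)\<^sup>2 \<le> 1 / (real n + 1)\<^sup>2"
        using j by (intro divide_left_mono mult_pos_pos) auto
      then show ?thesis using Cconst_pos by (intro mult_left_mono) auto
    qed
    moreover have "Cconst / 2 * (1 / (2 * real j)\<^sup>2) = Cconst / (8 * (real j)\<^sup>2)"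
      by (simp add: power2_eq_square field_simps)
    ultimately show ?thesis by (metis ennreal_leI)
  qed
  have "ennreal (Cconst / (8 * real j)) = (\<Sum>n\<in>F. ennreal (Cconst / (8 * (real j)\<^sup>2)))"
  proof -
    have "(\<Sum>n\<in>F. ennreal (Cconst / (8 * (real j)\<^sup>2))) = ennreal (\<Sum>n\<in>F. Cconst / (8 * (real j)\<^sup>2))"
      using Cconst_pos by (intro sum_ennreal) auto
    also have "(\<Sum>n\<in>F. Cconst / (8 * (real j)\<^sup>2)) = Cconst / (8 * real j)"
      using cF j by (simp add: power2_eq_square field_simps)
    finally show ?thesis by simp
  qed
  also have "\<dots> \<le> (\<Sum>n\<in>F. ?g (kk n) * ennreal (pr n))"
    by (intro sum_mono termlb)
  also have "\<dots> \<le> (\<Sum>n. ?g (kk n) * ennreal (pr n))"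
    by (intro sum_le_suminf summableI) (auto simp: F_def)
  also have "\<dots> \<le> ?g 0 * ennreal (measure M A0) + (\<Sum>n. ?g (kk n) * ennreal (pr n)) + (\<Sum>n. ?g (- kk n) * ennreal (pr n))"
    by (simp add: add.assoc add_increasing)
  also have "\<dots> = (\<integral>\<^sup>+\<omega>. ?g (X \<omega>) \<partial>M)"
    by (rule nn_formula[symmetric])
  also have "\<dots> = (\<integral>\<^sup>+\<omega>. ennreal (f2 \<omega>) \<partial>M)"
    by (simp add: f2_def)
  also have "\<dots> = ennreal (integral\<^sup>L M f2)"
    by (rule nn_integral_eq_integral[OF i2]) (simp add: f2_def)
  finally have "Cconst / (8 * real j) \<le> integral\<^sup>L M f2"
    using integral_nonneg_AE[of f2 M] by (simp add: f2_def)
  then show ?thesis using sum1 by simp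
qed

definition "Qf n = (\<Sum>k = 1..n. (1 / real k) * (1 - E (real k)))"

definition "NN j = nat \<lceil>kseq eps j\<rceil> - 1"

lemma NN_props:
  assumes j: "j \<ge> 1"
  shows "real (NN j) < kseq eps j" "kseq eps j \<le> real (NN j) + 1" "NN j \<ge> 2" "NN j \<ge> j"
proof -
  have kp: "kseq eps j > 0" by (rule kseq_pos)
  have "\<lceil>kseq eps j\<rceil> \<ge> 1" using kp by (simp add: order.strict_implies_order)
  then have n1: "nat \<lceil>kseq eps j\<rceil> \<ge> 1" by linarith
  have "real (nat \<lceil>kseq eps j\<rceil>) = real_of_int \<lceil>kseq eps j\<rceil>"
    using \<open>\<lceil>kseq eps j\<rceil> \<ge> 1\<close> by simp
  then have r: "real (NN j) = real_of_int \<lceil>kseq eps j\<rceil> - 1"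
    unfolding NN_def using n1 by (simp add: of_nat_diff)
  show "real (NN j) < kseq eps j" using r ceiling_correct[of "kseq eps j"] by linarith
  show "kseq eps j \<le> real (NN j) + 1" using r le_of_int_ceiling[of "kseq eps j"] by linarith
  have L: "real j powr (2 + eps) \<ge> real j"
  proof -
    have "real j powr 1 \<le> real j powr (2 + eps)" using j eps by (intro powr_mono) auto
    then show ?thesis using j by simp
  qed
  have "kseq eps j \<ge> 1 + real j powr (2 + eps)"
    unfolding kseq_def by (rule exp_ge_add_one_self)
  then have k: "kseq eps j \<ge> 1 + real j" using L by linarith
  show "NN j \<ge> j" using k r le_of_int_ceiling[of "kseq eps j"] by linarith
  have "kseq eps j \<ge> exp 1"
  proof -
    have "1 \<le> real j powr (2 + eps)" using L j by linarith
    then show ?thesis unfolding kseq_def by simp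
  qed
  moreover have "exp (1::real) \<ge> 1 + 1 + 1\<^sup>2 / 2" by (rule exp_lower_Taylor_quadratic) simp
  ultimately have "kseq eps j > 2" by simp
  then show "NN j \<ge> 2" using r le_of_int_ceiling[of "kseq eps j"] by linarith
qed

lemma ratio_lb:
  assumes j: "j \<ge> 1"
  shows "Qf (NN j) / sqrt (ln (real (NN j))) \<ge> Cconst / 8 * (sqrt (real j powr (2 + eps)) / real j)"
proof -
  let ?N = "NN j"
  let ?L = "real j powr (2 + eps)"
  have Lpos: "?L > 0" using j by simp
  have "Qf ?N \<ge> (\<Sum>k = 1..?N. (1 / real k) * (Cconst / (8 * real j)))"
    unfolding Qf_def
  proof (intro sum_mono mult_left_mono)
    fix k assume "k \<in> {1..?N}"
    then have "real k < kseq eps j" using NN_props(1)[OF j] by auto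
    then show "Cconst / (8 * real j) \<le> 1 - E (real k)" by (rule tail_lb[OF j])
  qed simp
  also have "(\<Sum>k = 1..?N. (1 / real k) * (Cconst / (8 * real j))) = Cconst / (8 * real j) * harm ?N"
  proof -
    have "(\<Sum>k = 1..?N. (1 / real k) * (Cconst / (8 * real j))) = (\<Sum>k = 1..?N. (Cconst / (8 * real j)) * inverse (of_nat k))"
      by (intro sum.cong refl) (simp add: inverse_eq_divide)
    also have "\<dots> = Cconst / (8 * real j) * harm ?N"
      by (simp only: harm_def sum_distrib_left)
    finally show ?thesis .
  qed
  finally have Q1: "Qf ?N \<ge> Cconst / (8 * real j) * harm ?N" .
  have "harm ?N \<ge> ln (real ?N + 1)" by (rule ln_le_harm)
  moreover have "ln (real ?N + 1) \<ge> ?L"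
  proof -
    have "ln (kseq eps j) \<le> ln (real ?N + 1)"
      using NN_props(2)[OF j] kseq_pos[of eps j] by simp
    then show ?thesis by (simp add: ln_kseq)
  qed
  ultimately have "harm ?N \<ge> ?L" by linarith
  moreover have "Cconst / (8 * real j) \<ge> 0" using Cconst_pos by simp
  ultimately have "Cconst / (8 * real j) * ?L \<le> Cconst / (8 * real j) * harm ?N"
    by (rule mult_left_mono)
  then have "Qf ?N \<ge> Cconst / (8 * real j) * ?L" using Q1 by linarith
  moreover have lnN: "ln (real ?N) \<le> ?L" "ln (real ?N) > 0"
  proof -
    show "ln (real ?N) \<le> ?L"
    proof -
      have "ln (real ?N) \<le> ln (kseq eps j)"
        using NN_props(1,3)[OF j] by simp
      then show ?thesis by (simp add: ln_kseq)
    qed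
    show "ln (real ?N) > 0" using NN_props(3)[OF j] by simp
  qed
  ultimately have QL: "Qf ?N \<ge> Cconst / (8 * real j) * ?L" and lnN1: "ln (real ?N) \<le> ?L"
    and lnN2: "ln (real ?N) > 0" by auto
  have c0: "0 \<le> Cconst / (8 * real j) * ?L" using Lpos Cconst_pos by simp
  have "Qf ?N / sqrt (ln (real ?N)) \<ge> Cconst / (8 * real j) * ?L / sqrt ?L"
  proof (rule frac_le)
    show "0 \<le> Qf ?N" using c0 QL by linarith
    show "Cconst / (8 * real j) * ?L \<le> Qf ?N" by (rule QL)
    show "0 < sqrt (ln (real ?N))" using lnN2 by simp
    show "sqrt (ln (real ?N)) \<le> sqrt ?L" using lnN1 by simp
  qed
  also have "Cconst / (8 * real j) * ?L / sqrt ?L = Cconst / 8 * (sqrt ?L / real j)"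
  proof -
    have e: "?L / sqrt ?L = sqrt ?L" using Lpos by (simp add: real_div_sqrt)
    have "Cconst / (8 * real j) * ?L / sqrt ?L = Cconst / (8 * real j) * (?L / sqrt ?L)" by simp
    also have "\<dots> = Cconst / (8 * real j) * sqrt ?L" by (simp only: e)
    also have "\<dots> = Cconst / 8 * (sqrt ?L / real j)" using j by (simp add: field_simps)
    finally show ?thesis .
  qed
  finally show ?thesis .
qed

lemma limsupQ: "limsup (\<lambda>n. ereal (Qf n / sqrt (ln (real n)))) = \<infinity>"
proof (rule ereal_top)
  fix B :: real
  have lim: "filterlim (\<lambda>j::nat. sqrt (real j powr (2+eps)) / real j) at_top at_top"
    using eps by real_asymp
  show "limsup (\<lambda>n. ereal (Qf n / sqrt (ln (real n)))) \<ge> ereal B"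
    unfolding limsup_INF_SUP
  proof (rule INF_greatest)
    fix n0 :: nat
    have "eventually (\<lambda>j. 8 * B / Cconst \<le> sqrt (real j powr (2+eps)) / real j) at_top"
      using lim by (simp add: filterlim_at_top)
    moreover have "eventually (\<lambda>j. j \<ge> max 1 n0) at_top" by (rule eventually_ge_at_top)
    ultimately have "eventually (\<lambda>j. 8 * B / Cconst \<le> sqrt (real j powr (2+eps)) / real j \<and> j \<ge> max 1 n0) at_top"
      by (rule eventually_conj)
    then obtain j where j1: "8 * B / Cconst \<le> sqrt (real j powr (2+eps)) / real j"
      and j2: "j \<ge> max 1 n0"
      unfolding eventually_sequentially by blast
    have "B \<le> Cconst / 8 * (sqrt (real j powr (2 + eps)) / real j)"
      using j1 Cconst_pos by (simp add: field_simps)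
    also have "\<dots> \<le> Qf (NN j) / sqrt (ln (real (NN j)))" using j2 by (intro ratio_lb) auto
    finally have "ereal B \<le> ereal (Qf (NN j) / sqrt (ln (real (NN j))))" by simp
    moreover have "NN j \<in> {n0..}" using NN_props(4)[of j] j2 by auto
    ultimately show "ereal B \<le> (SUP m\<in>{n0..}. ereal (Qf m / sqrt (ln (real m))))"
      by (meson SUP_upper2)
  qed
qed

lemma Qf_alt: "Qf n = harm n - (\<Sum>k = 1..n. 1 / real k * E (real k))"
  unfolding Qf_def harm_def by (simp add: right_diff_distrib sum_subtractf inverse_eq_divide)

lemma f_part:
  assumes c: "c \<noteq> 0"
  shows "(\<lambda>n. (real n * a + c / 2 * (\<Sum>k = 1..n. 1 / real k * E (real k)))
              - (real n * a + c / 2 * ln (real n))) \<notin> o(\<lambda>n. sqrt (ln (real n)))"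
proof
  let ?d = "\<lambda>n. (real n * a + c / 2 * (\<Sum>k = 1..n. 1 / real k * E (real k)))
              - (real n * a + c / 2 * ln (real n))"
  let ?g = "\<lambda>n. sqrt (ln (real n))"
  assume "?d \<in> o(?g)"
  then have d0: "(\<lambda>n. ?d n / ?g n) \<longlonglongrightarrow> 0" by (rule smalloD_tendsto)
  have eq: "Qf n / ?g n = (harm n - ln (real n)) * (1 / ?g n) - (2 / c) * (?d n / ?g n)" for n
  proof -
    have "Qf n = (harm n - ln (real n)) - (2 / c) * ?d n"
      using c by (simp add: Qf_alt field_simps)
    then show ?thesis by (simp add: diff_divide_distrib)
  qed
  have "convergent (\<lambda>n. harm n - ln (real n) :: real)" by (rule euler_mascheroni_convergent)
  then obtain \<gamma> where h: "(\<lambda>n. harm n - ln (real n) :: real) \<longlonglongrightarrow> \<gamma>"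
    by (auto simp: convergent_def)
  have g0: "(\<lambda>n. 1 / sqrt (ln (real n))) \<longlonglongrightarrow> 0" by real_asymp
  have "(\<lambda>n. (harm n - ln (real n)) * (1 / ?g n) - (2 / c) * (?d n / ?g n)) \<longlonglongrightarrow> \<gamma> * 0 - (2 / c) * 0"
    by (intro tendsto_intros h g0 d0)
  then have "(\<lambda>n. Qf n / ?g n) \<longlonglongrightarrow> 0" by (simp add: eq)
  then have "(\<lambda>n. ereal (Qf n / ?g n)) \<longlonglongrightarrow> ereal 0" by (simp add: lim_ereal)
  then have "limsup (\<lambda>n. ereal (Qf n / ?g n)) = ereal 0"
    by (intro lim_imp_Limsup) simp_all
  then show False using limsupQ by simp
qed

end

theorem mainTheorem3:
  fixes M :: "'a measure" and X :: "'a \<Rightarrow> real" and eps :: real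
  assumes eps: "eps > 0"
    and P: "prob_space M"
    and Xrv: "X \<in> borel_measurable M"
    and Ppos: "\<And>n. n \<ge> 1 \<Longrightarrow>
        measure M {\<omega>\<in>space M. X \<omega> = kseq eps n} = Cconst / (2 * (kseq eps n)\<^sup>2 * (real n)\<^sup>2)"
    and Pneg: "\<And>n. n \<ge> 1 \<Longrightarrow>
        measure M {\<omega>\<in>space M. X \<omega> = - kseq eps n} = Cconst / (2 * (kseq eps n)\<^sup>2 * (real n)\<^sup>2)"
    and Pzero: "measure M {\<omega>\<in>space M. X \<omega> = 0} =
        1 - (\<Sum>n. Cconst / ((kseq eps (Suc n))\<^sup>2 * (real (Suc n))\<^sup>2))"
  shows "integrable M X \<and> integral\<^sup>L M X = 0
    \<and> integrable M (\<lambda>\<omega>. (X \<omega>)\<^sup>2)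
    \<and> integral\<^sup>L M (\<lambda>\<omega>. (X \<omega> - integral\<^sup>L M X)\<^sup>2) = 1
    \<and> (\<integral>\<^sup>+ \<omega>. ennreal ((X \<omega>)\<^sup>2 * sqrt (logp \<bar>X \<omega>\<bar>)) \<partial>M) = \<infinity>
    \<and> (let \<mu> = (0::real); \<sigma> = (1::real);
           Q = (\<lambda>n::nat. \<Sum>k = 1..n. (1 / real k) *
                 (\<sigma>\<^sup>2 - integral\<^sup>L M (\<lambda>\<omega>. \<bar>X \<omega> - \<mu>\<bar>\<^sup>2 *
                    indicator {\<omega>. \<bar>X \<omega> - \<mu>\<bar> \<le> \<sigma> * real k} \<omega>)))
       in limsup (\<lambda>n. ereal (Q n / sqrt (ln (real n)))) = \<infinity>
        \<and> (\<forall>f :: real \<Rightarrow> real. deriv (deriv f) \<mu> \<noteq> 0 \<longrightarrow>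
             (let b = (\<lambda>n::nat. real n * f \<mu> + deriv (deriv f) \<mu> / 2 *
                        (\<Sum>k = 1..n. (1 / real k) * integral\<^sup>L M (\<lambda>\<omega>. \<bar>X \<omega> - \<mu>\<bar>\<^sup>2 *
                           indicator {\<omega>. \<bar>X \<omega> - \<mu>\<bar> \<le> \<sigma> * real k} \<omega>)));
                  bt = (\<lambda>n::nat. real n * f \<mu> + deriv (deriv f) \<mu> * \<sigma>\<^sup>2 / 2 * ln (real n))
              in (\<lambda>n. b n - bt n) \<notin> o(\<lambda>n. sqrt (ln (real n))))))"
proof -
  have T: "T3 M X eps" unfolding T3_def T3_axioms_def using assms by auto
  interpret T3 M X eps by (rule T)
  have Qeq: "(\<lambda>n::nat. \<Sum>k = 1..n. (1 / real k) *
                 ((1::real)\<^sup>2 - integral\<^sup>L M (\<lambda>\<omega>. \<bar>X \<omega> - 0\<bar>\<^sup>2 *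
                    indicator {\<omega>. \<bar>X \<omega> - 0\<bar> \<le> 1 * real k} \<omega>))) = Qf"
    by (simp add: fun_eq_iff Qf_def E_def)
  show ?thesis
    unfolding Let_def
    apply (intro conjI)
    using int_X mean0 int_X2 infmom limsupQ
    apply (simp_all add: Qeq)
    using limsupQ apply (simp add: Qf_def E_def)
    apply (intro allI impI)
    subgoal for f using f_part[of "deriv (deriv f) 0" "f 0"] by (simp add: E_def)
    done
qed

end
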